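(* Let $x,y$ be real (or complex) numbers with $x\neq 0$, $y\neq 0$ and $x+y\neq 0$. Then for every nonnegative integer $n$, $$\sum_{k=0}^{n}\binom{n}{k}^{-1}x^ky^{n-k}=x^n+\left(\frac{xy}{x+y}\right)^n(n+1)\sum_{j=0}^{n-1}\frac{\big((j+1)y^{j+2}+y\,x^{j+1}\big)(x+y)^j}{(xy)^{j+1}(j+1)(j+2)}.$$ *)

theory Defs
  imports Complex_Main
begin

end

theory Submission
  imports Defs
begin

lemma abs_recip:
  fixes b c d m M P Q :: "'a::field"
  assumes "c \<noteq> 0" "m \<noteq> 0" "P \<noteq> 0" "Q \<noteq> 0" "M \<noteq> 0"
    "P * b = m * c" "Q * d = m * c" "P + Q = M"
  shows "1 / c = m / M * (1 / b + 1 / d)"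
proof -
  have b: "b = m * c / P" using assms by (simp add: eq_divide_eq mult.commute)
  have d: "d = m * c / Q" using assms by (simp add: eq_divide_eq mult.commute)
  have "1/b = P/(m*c)" unfolding b using assms by simp
  moreover have "1/d = Q/(m*c)" unfolding d using assms by simp
  ultimately have "1/b + 1/d = M/(m*c)" using assms(8) add_divide_distrib[of P Q "m*c"] by simp
  then show ?thesis using assms by simp
qed

lemma recip_binom:
  assumes "k \<le> n"
  shows "1 / (of_nat (n choose k) :: 'a::field_char_0) =
    of_nat (n+1) / of_nat (n+2) * (1 / of_nat (Suc n choose k) + 1 / of_nat (Suc n choose Suc k))"
proof (rule abs_recip[where P="of_nat (Suc n - k)" and Q="of_nat (Suc k)"])
  show "(of_nat (n choose k) :: 'a) \<noteq> 0" using assms by (simp only: of_nat_eq_0_iff) simp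
  show "(of_nat (n+1) :: 'a) \<noteq> 0" by (metis of_nat_neq_0 Suc_eq_plus1)
  show "(of_nat (n+2) :: 'a) \<noteq> 0" by (metis of_nat_neq_0 add_2_eq_Suc')
  have "Suc n - k \<noteq> 0" using assms by simp
  then show "(of_nat (Suc n - k) :: 'a) \<noteq> 0" by (simp only: of_nat_eq_0_iff) simp
  show "(of_nat (Suc k) :: 'a) \<noteq> 0" by (rule of_nat_neq_0)
  have e1: "(Suc n - k) * (Suc n choose k) = (n+1) * (n choose k)"
    using binomial_absorb_comp[of "Suc n" k] by simp
  then show "(of_nat (Suc n - k) :: 'a) * of_nat (Suc n choose k) = of_nat (n+1) * of_nat (n choose k)"
    by (metis of_nat_mult)
  have e2: "Suc k * (Suc n choose Suc k) = (n+1) * (n choose k)"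
    using Suc_times_binomial by simp
  then show "(of_nat (Suc k) :: 'a) * of_nat (Suc n choose Suc k) = of_nat (n+1) * of_nat (n choose k)"
    by (metis of_nat_mult)
  have "Suc n - k + Suc k = n + 2" using assms by simp
  then show "(of_nat (Suc n - k) :: 'a) + of_nat (Suc k) = of_nat (n+2)" by (metis of_nat_add)
qed

lemma helper_dist:
  fixes a r u v :: "'a::field"
  shows "a * (r * (1/u + 1/v)) = r * (a / u + a / v)"
  by (simp add: divide_inverse ring_distribs mult_ac)

lemma S_rec:
  fixes x y :: "'a :: field_char_0"
  defines "S \<equiv> \<lambda>n. (\<Sum>k=0..n. x ^ k * y ^ (n - k) / of_nat (n choose k))"
  shows "x * y * S n = of_nat (n+1) / of_nat (n+2) *
     (x * (S (Suc n) - x ^ Suc n) + y * (S (Suc n) - y ^ Suc n))"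
proof -
  have "x * y * S n = (\<Sum>k=0..n. x ^ Suc k * y ^ (Suc n - k) * (1 / of_nat (n choose k)))"
    unfolding S_def by (simp add: sum_distrib_left Suc_diff_le field_simps)
  also have "\<dots> = (\<Sum>k=0..n. of_nat (n+1) / of_nat (n+2) * (x ^ Suc k * y ^ (Suc n - k) / of_nat (Suc n choose k)
        + x ^ Suc k * y ^ (Suc n - k) / of_nat (Suc n choose Suc k)))"
  proof (rule sum.cong)
    fix k assume "k \<in> {0..n}"
    then have "k \<le> n" by simp
    show "x ^ Suc k * y ^ (Suc n - k) * (1 / of_nat (n choose k)) =
      of_nat (n+1) / of_nat (n+2) * (x ^ Suc k * y ^ (Suc n - k) / of_nat (Suc n choose k)
        + x ^ Suc k * y ^ (Suc n - k) / of_nat (Suc n choose Suc k))"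
      unfolding recip_binom[OF \<open>k \<le> n\<close>] by (rule helper_dist)
  qed simp
  also have "\<dots> = of_nat (n+1) / of_nat (n+2) * ((\<Sum>k=0..n. x ^ Suc k * y ^ (Suc n - k) / of_nat (Suc n choose k))
        + (\<Sum>k=0..n. x ^ Suc k * y ^ (Suc n - k) / of_nat (Suc n choose Suc k)))"
    by (simp only: sum.distrib[symmetric] sum_distrib_left)
  also have "(\<Sum>k=0..n. x ^ Suc k * y ^ (Suc n - k) / of_nat (Suc n choose k)) = x * (S (Suc n) - x ^ Suc n)"
    unfolding S_def by (simp add: sum.atLeast0_atMost_Suc sum_distrib_left field_simps)
  also have "(\<Sum>k=0..n. x ^ Suc k * y ^ (Suc n - k) / of_nat (Suc n choose Suc k)) = y * (S (Suc n) - y ^ Suc n)"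
  proof -
    have "(\<Sum>k=0..n. x ^ Suc k * y ^ (Suc n - k) / of_nat (Suc n choose Suc k))
        = y * (\<Sum>k=0..n. x ^ Suc k * y ^ (Suc n - Suc k) / of_nat (Suc n choose Suc k))"
      by (simp add: sum_distrib_left Suc_diff_le field_simps)
    also have "(\<Sum>k=0..n. x ^ Suc k * y ^ (Suc n - Suc k) / of_nat (Suc n choose Suc k)) = S (Suc n) - y ^ Suc n"
      unfolding S_def by (subst sum.atLeast0_atMost_Suc_shift) simp
    finally show ?thesis .
  qed
  finally show ?thesis .
qed

lemma gen_S:
  fixes x y m M Sn S1 X Y :: "'a::field"
  assumes "m \<noteq> 0" "M \<noteq> 0" "x * y * Sn = m / M * (x * (S1 - X) + y * (S1 - Y))"
  shows "(x + y) * S1 = M / m * (x * y * Sn) + x * X + y * Y"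
proof -
  have "M / m * (x * y * Sn) = x * (S1 - X) + y * (S1 - Y)" using assms by (simp add: field_simps)
  then show ?thesis by (simp add: algebra_simps)
qed

lemma gen_K2:
  fixes x y m M P Q A B :: "'a::field"
  assumes "m \<noteq> 0" "M \<noteq> 0" "x \<noteq> 0" "y \<noteq> 0" "P \<noteq> 0" "Q \<noteq> 0"
  shows "x * y * (P / Q) * M * (((m * B + y * A) * Q) / ((x * y * P) * m * M)) = y * A / m + B"
  using assms by (simp add: field_simps)

lemma gen_fin:
  fixes x y m M X Z B :: "'a::field"
  assumes "m \<noteq> 0" "M = m + 1"
  shows "(x + y) * (x * X) + x * y * Z * M + (y * (x * X) / m + B) = M / m * (x * y * (X + Z * m)) + x * (x * X) + B"
  using assms by (simp add: field_simps)

theorem mainTheorem5: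
  fixes x y :: "'a :: field_char_0" and n :: nat
  assumes "x \<noteq> 0" and "y \<noteq> 0" and "x + y \<noteq> 0"
  shows "(\<Sum>k=0..n. x ^ k * y ^ (n - k) / of_nat (n choose k)) =
    x ^ n + (x * y / (x + y)) ^ n * of_nat (n + 1) *
      (\<Sum>j=0..<n. ((of_nat (j + 1) * y ^ (j + 2) + y * x ^ (j + 1)) * (x + y) ^ j) /
         ((x * y) ^ (j + 1) * of_nat (j + 1) * of_nat (j + 2)))"
proof -
  define S where "S \<equiv> \<lambda>n. (\<Sum>k=0..n. x ^ k * y ^ (n - k) / of_nat (n choose k))"
  define A where "A \<equiv> \<lambda>n. (\<Sum>j=0..<n. ((of_nat (j + 1) * y ^ (j + 2) + y * x ^ (j + 1)) * (x + y) ^ j) /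
         ((x * y) ^ (j + 1) * of_nat (j + 1) * of_nat (j + 2)))"
  define q where "q = x * y / (x + y)"
  define R where "R \<equiv> \<lambda>n. x ^ n + q ^ n * of_nat (n + 1) * A n"
  have n1: "(of_nat (n+1) :: 'a) \<noteq> 0" "(of_nat (n+2) :: 'a) \<noteq> 0" for n
    by (metis of_nat_neq_0 Suc_eq_plus1, metis of_nat_neq_0 add_2_eq_Suc')
  have mM: "(of_nat (n+2) :: 'a) = of_nat (n+1) + 1" for n by simp
  have Srec: "(x + y) * S (Suc n) = of_nat (n+2) / of_nat (n+1) * (x * y * S n) + x * x ^ Suc n + y * y ^ Suc n" for n
  proof (rule gen_S[OF n1])
    show "x * y * S n = of_nat (n+1) / of_nat (n+2) *
     (x * (S (Suc n) - x ^ Suc n) + y * (S (Suc n) - y ^ Suc n))"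
      unfolding S_def by (rule S_rec)
  qed
  have Rrec: "(x + y) * R (Suc n) = of_nat (n+2) / of_nat (n+1) * (x * y * R n) + x * x ^ Suc n + y * y ^ Suc n" for n
  proof -
    define c where "c = ((of_nat (n + 1) * y ^ (n + 2) + y * x ^ (n + 1)) * (x + y) ^ n) /
         ((x * y) ^ (n + 1) * (of_nat (n + 1) :: 'a) * of_nat (n + 2))"
    have As: "A (Suc n) = A n + c"
      unfolding A_def c_def by simp
    have K1: "(x + y) * q ^ (n+1) = x * y * q ^ n" using assms unfolding q_def by (simp add: mult.assoc[symmetric])
    have qn: "q ^ n = (x*y)^n / (x+y)^n" unfolding q_def by (simp add: power_divide)
    have K2: "x * y * q ^ n * of_nat (n+2) * c = y * x ^ (n+1) / of_nat (n+1) + y ^ (n+2)"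
    proof -
      have p: "(x*y)^(n+1) = x*y*(x*y)^n" by simp
      have nz: "(x*y)^n \<noteq> 0" "(x+y)^n \<noteq> 0" using assms by simp_all
      show ?thesis unfolding qn c_def p by (rule gen_K2[OF n1 assms(1,2) nz])
    qed
    have RS: "R (Suc n) = x ^ Suc n + q ^ (n+1) * of_nat (n+2) * (A n + c)"
      unfolding R_def As by simp
    have "(x + y) * R (Suc n) = (x + y) * x ^ Suc n + ((x + y) * q ^ (n+1)) * of_nat (n+2) * A n
       + (x + y) * q ^ (n+1) * of_nat (n+2) * c"
      unfolding RS by (simp only: ring_distribs mult.assoc add.assoc)
    also have "\<dots> = (x + y) * (x * x ^ n) + x * y * (q ^ n * A n) * of_nat (n+2)
       + (y * (x * x ^ n) / of_nat (n+1) + y * y ^ Suc n)"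
      unfolding K1 K2 by (simp add: ac_simps)
    also have "\<dots> = of_nat (n+2) / of_nat (n+1) * (x * y * (x ^ n + (q ^ n * A n) * of_nat (n+1))) + x * (x * x ^ n) + y * y ^ Suc n"
      by (rule gen_fin[OF n1(1) mM])
    also have "\<dots> = of_nat (n+2) / of_nat (n+1) * (x * y * R n) + x * x ^ Suc n + y * y ^ Suc n"
      unfolding R_def by (simp add: mult.assoc mult.left_commute)
    finally show ?thesis .
  qed
  have "S n = R n"
  proof (induction n)
    case 0 then show ?case by (simp add: S_def R_def A_def)
  next
    case (Suc n)
    have "(x + y) * S (Suc n) = (x + y) * R (Suc n)" using Srec[of n] Rrec[of n] Suc by simp
    then show ?case using assms(3) by simp
  qed
  then show ?thesis unfolding S_def R_def A_def q_def .
qed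

end
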